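(* Fix integers $p,q\ge 0$ and integers $L_1,\dots,L_q\ge 1$. Fix an observation $(x,y)$ with $x=(x_1,\dots,x_p)\in\mathbb{R}^p$ and $y=(y_1,\dots,y_q)$, $y_j\in\{1,\dots,L_j\}$. Consider the parameters $\Theta=\{\beta_{ss},\beta_{st},\alpha_s,\rho_{sj},\phi_{rj}\}$, where $\beta_{st}=\beta_{ts}\in\mathbb{R}$ for $s,t\in\{1,\dots,p\}$, $\alpha_s\in\mathbb{R}$, $\rho_{sj}=(\rho_{sj}(1),\dots,\rho_{sj}(L_j))\in\mathbb{R}^{L_j}$ for $s\le p$, $j\le q$, and $\phi_{rj}\in\mathbb{R}^{L_r\times L_j}$ for $r,j\le q$ with $\phi_{rj}(a,b)=\phi_{jr}(b,a)$ (so symmetric pairs are one and the same parameter). Define the negative log pseudolikelihood $$\tilde\ell(\Theta\mid x,y)=-\sum_{s=1}^p\log p(x_s\mid x_{\setminus s},y;\Theta)-\sum_{r=1}^q\log p(y_r\mid x,y_{\setminus r};\Theta),$$ where $$p(x_s\mid x_{\setminus s},y;\Theta)=\frac{\sqrt{\beta_{ss}}}{\sqrt{2\pi}}\exp\!\left(-\frac{\beta_{ss}}{2}\left(\frac{\alpha_s+\sum_{j=1}^q\rho_{sj}(y_j)-\sum_{t\ne s}\beta_{st}x_t}{\beta_{ss}}-x_s\right)^2\right)$$ and $$p(y_r\mid x,y_{\setminus r};\Theta)=\frac{\exp\!\left(\sum_{s=1}^p\rho_{sr}(y_r)x_s+\phi_{rr}(y_r,y_r)+\sum_{j\ne r}\phi_{rj}(y_r,y_j)\right)}{\sum_{l=1}^{L_r}\exp\!\left(\sum_{s=1}^p\rho_{sr}(l)x_s+\phi_{rr}(l,l)+\sum_{j\ne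 r}\phi_{rj}(l,y_j)\right)}.$$ Then $\tilde\ell(\Theta\mid x,y)$ is jointly convex in all the parameters $\{\beta_{ss},\beta_{st},\alpha_s,\phi_{rj},\rho_{sj}\}$ over the region where $\beta_{ss}>0$ for all $s=1,\dots,p$.
   Context: This is the pseudolikelihood of a pairwise mixed graphical model on $p$ continuous variables $x_s$ and $q$ discrete variables $y_j$ (taking $L_j$ states), with joint density proportional to $\exp\big(\sum_{s,t}-\tfrac12\beta_{st}x_sx_t+\sum_s\alpha_sx_s+\sum_{s,j}\rho_{sj}(y_j)x_s+\sum_{r,j}\phi_{rj}(y_r,y_j)\big)$; the displayed conditionals are the Gaussian (for $x_s$) and multinomial-logistic (for $y_r$) conditional distributions of this model. Here $x_{\setminus s}$ denotes all continuous coordinates except $x_s$ and $y_{\setminus r}$ all discrete coordinates except $y_r$. *)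

theory Defs
  imports "HOL-Analysis.Analysis"
begin

text \<open>Indices are 1-based:
 continuous variables s in {1..p}, discrete variables r in {1..q}, levels of y_j in {1..L j}.
 Parameters: beta s t, alpha s, rho s j l (= rho_{sj}(l)), phi r j a b (= phi_{rj}(a,b)).\<close>

definition cond_x ::
  "nat \<Rightarrow> nat \<Rightarrow> (nat \<Rightarrow> nat \<Rightarrow> real) \<Rightarrow> (nat \<Rightarrow> real) \<Rightarrow> (nat \<Rightarrow> nat \<Rightarrow> nat \<Rightarrow> real)
   \<Rightarrow> (nat \<Rightarrow> real) \<Rightarrow> (nat \<Rightarrow> nat) \<Rightarrow> nat \<Rightarrow> real" where
  "cond_x p q \<beta> \<alpha> \<rho> x y s =
     sqrt (\<beta> s s) / sqrt (2 * pi) *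
     exp (- (\<beta> s s / 2) *
       ((\<alpha> s + (\<Sum>j\<in>{1..q}. \<rho> s j (y j)) - (\<Sum>t\<in>{1..p} - {s}. \<beta> s t * x t)) / \<beta> s s
         - x s)\<^sup>2)"

definition cond_y ::
  "nat \<Rightarrow> nat \<Rightarrow> (nat \<Rightarrow> nat) \<Rightarrow> (nat \<Rightarrow> nat \<Rightarrow> nat \<Rightarrow> real) \<Rightarrow> (nat \<Rightarrow> nat \<Rightarrow> nat \<Rightarrow> nat \<Rightarrow> real)
   \<Rightarrow> (nat \<Rightarrow> real) \<Rightarrow> (nat \<Rightarrow> nat) \<Rightarrow> nat \<Rightarrow> real" where
  "cond_y p q L \<rho> \<phi> x y r =
     exp ((\<Sum>s\<in>{1..p}. \<rho> s r (y r) * x s) + \<phi> r r (y r) (y r)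
          + (\<Sum>j\<in>{1..q} - {r}. \<phi> r j (y r) (y j)))
     / (\<Sum>l\<in>{1..L r}. exp ((\<Sum>s\<in>{1..p}. \<rho> s r l * x s) + \<phi> r r l l
          + (\<Sum>j\<in>{1..q} - {r}. \<phi> r j l (y j))))"

definition neg_log_pl ::
  "nat \<Rightarrow> nat \<Rightarrow> (nat \<Rightarrow> nat) \<Rightarrow> (nat \<Rightarrow> nat \<Rightarrow> real) \<Rightarrow> (nat \<Rightarrow> real)
   \<Rightarrow> (nat \<Rightarrow> nat \<Rightarrow> nat \<Rightarrow> real) \<Rightarrow> (nat \<Rightarrow> nat \<Rightarrow> nat \<Rightarrow> nat \<Rightarrow> real)
   \<Rightarrow> (nat \<Rightarrow> real) \<Rightarrow> (nat \<Rightarrow> nat) \<Rightarrow> real" where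
  "neg_log_pl p q L \<beta> \<alpha> \<rho> \<phi> x y =
     - (\<Sum>s\<in>{1..p}. ln (cond_x p q \<beta> \<alpha> \<rho> x y s))
     - (\<Sum>r\<in>{1..q}. ln (cond_y p q L \<rho> \<phi> x y r))"

definition param_region ::
  "nat \<Rightarrow> nat \<Rightarrow> (nat \<Rightarrow> nat) \<Rightarrow> (nat \<Rightarrow> nat \<Rightarrow> real) \<Rightarrow> (nat \<Rightarrow> nat \<Rightarrow> nat \<Rightarrow> nat \<Rightarrow> real) \<Rightarrow> bool" where
  "param_region p q L \<beta> \<phi> \<longleftrightarrow>
     (\<forall>s\<in>{1..p}. \<forall>t\<in>{1..p}. \<beta> s t = \<beta> t s) \<and>
     (\<forall>s\<in>{1..p}. \<beta> s s > 0) \<and>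
     (\<forall>r\<in>{1..q}. \<forall>j\<in>{1..q}. \<forall>a\<in>{1..L r}. \<forall>b\<in>{1..L j}. \<phi> r j a b = \<phi> j r b a)"

end

theory Submission
  imports Defs
begin

lemma expc:
  fixes u a b :: real assumes "0 \<le> u" "u \<le> 1"
  shows "exp ((1-u)*a + u*b) \<le> (1-u)*exp a + u*exp b"
  using convex_onD[OF exp_convex, of u a b] assms by simp

lemma lnc:
  fixes u a b :: real assumes "0 \<le> u" "u \<le> 1" "a > 0" "b > 0"
  shows "(1-u)*ln a + u*ln b \<le> ln ((1-u)*a + u*b)"
proof -
  have "exp ((1-u)*ln a + u*ln b) \<le> (1-u)*a + u*b"
    using expc[OF assms(1,2), of "ln a" "ln b"] assms by simp
  moreover have "(1-u)*a + u*b > 0"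
    using assms by (cases "u = 0") (auto intro: add_nonneg_pos add_pos_nonneg)
  ultimately show ?thesis
    by (metis exp_le_cancel_iff exp_ln)
qed

lemma qol:
  fixes u w1 w2 b1 b2 :: real assumes "0 \<le> u" "u \<le> 1" "b1 > 0" "b2 > 0"
  shows "((1-u)*w1 + u*w2)^2 / ((1-u)*b1 + u*b2) \<le> (1-u)*(w1^2/b1) + u*(w2^2/b2)"
proof -
  have B: "(1-u)*b1 + u*b2 > 0"
    using assms by (cases "u = 0") (auto intro: add_nonneg_pos add_pos_nonneg)
  have key: "((1-u)*(w1^2/b1) + u*(w2^2/b2)) * ((1-u)*b1 + u*b2) - ((1-u)*w1 + u*w2)^2
      = (1-u)*u*(w1*b2 - w2*b1)^2/(b1*b2)"
    using assms by (simp add: field_simps power2_eq_square)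
  have "(1-u)*u*(w1*b2 - w2*b1)^2/(b1*b2) \<ge> 0" using assms by simp
  hence "((1-u)*w1 + u*w2)^2 \<le> ((1-u)*(w1^2/b1) + u*(w2^2/b2)) * ((1-u)*b1 + u*b2)"
    using key by linarith
  thus ?thesis using B by (simp add: divide_le_eq)
qed


lemma lse:
  fixes u :: real and a b :: "nat \<Rightarrow> real" and S :: "nat set"
  assumes "0 \<le> u" "u \<le> 1" "finite S" "S \<noteq> {}"
  shows "ln (\<Sum>l\<in>S. exp ((1-u)*a l + u*b l)) \<le> (1-u)*ln (\<Sum>l\<in>S. exp (a l)) + u*ln (\<Sum>l\<in>S. exp (b l))"
proof -
  define A where "A = (\<Sum>l\<in>S. exp (a l))"
  define B where "B = (\<Sum>l\<in>S. exp (b l))"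
  have A: "A > 0" unfolding A_def using assms by (intro sum_pos) auto
  have B: "B > 0" unfolding B_def using assms by (intro sum_pos) auto
  define K where "K = (1-u)*ln A + u*ln B"
  have each: "exp ((1-u)*a l + u*b l) / exp K \<le> (1-u)*(exp (a l)/A) + u*(exp (b l)/B)" for l
  proof -
    have "exp ((1-u)*a l + u*b l) / exp K = exp ((1-u)*(a l - ln A) + u*(b l - ln B))"
      unfolding K_def by (simp add: exp_diff[symmetric] algebra_simps)
    also have "\<dots> \<le> (1-u)*exp (a l - ln A) + u*exp (b l - ln B)" by (rule expc[OF assms(1,2)])
    also have "\<dots> = (1-u)*(exp (a l)/A) + u*(exp (b l)/B)" using A B by (simp add: exp_diff)
    finally show ?thesis .
  qed
  have "(\<Sum>l\<in>S. exp ((1-u)*a l + u*b l)) / exp K = (\<Sum>l\<in>S. exp ((1-u)*a l + u*b l) / exp K)"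
    by (simp add: sum_divide_distrib)
  also have "\<dots> \<le> (\<Sum>l\<in>S. (1-u)*(exp (a l)/A) + u*(exp (b l)/B))" by (rule sum_mono[OF each])
  also have "\<dots> = (1-u)*(A/A) + u*(B/B)"
    by (simp add: sum.distrib sum_distrib_left[symmetric] sum_divide_distrib[symmetric] A_def B_def)
  also have "\<dots> = 1" using A B by simp
  finally have "(\<Sum>l\<in>S. exp ((1-u)*a l + u*b l)) \<le> exp K" by (simp add: divide_le_eq)
  moreover have "(\<Sum>l\<in>S. exp ((1-u)*a l + u*b l)) > 0" using assms by (intro sum_pos) auto
  ultimately show ?thesis unfolding K_def A_def B_def by (metis ln_exp ln_le_cancel_iff exp_gt_zero)
qed

definition gx :: "real \<Rightarrow> real \<Rightarrow> real \<Rightarrow> real" where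
  "gx b c z = sqrt b / sqrt (2 * pi) * exp (- (b / 2) * (c / b - z)\<^sup>2)"

lemma gx_eq: assumes "b > 0"
  shows "- ln (gx b c z) = - ln b / 2 + ln (sqrt (2*pi)) + (c - b*z)^2 / (2*b)"
proof -
  have "- ln (gx b c z) = - (ln (sqrt b) - ln (sqrt (2*pi)) - (b / 2) * (c / b - z)\<^sup>2)"
    unfolding gx_def using assms by (simp add: ln_mult ln_div)
  also have "(b / 2) * (c / b - z)\<^sup>2 = (c - b*z)^2 / (2*b)"
    using assms by (simp add: field_simps power2_eq_square)
  finally show ?thesis using assms by (simp add: ln_sqrt)
qed

lemma gx_conv:
  fixes u :: real assumes "0 \<le> u" "u \<le> 1" "b1 > 0" "b2 > 0"
  shows "- ln (gx ((1-u)*b1 + u*b2) ((1-u)*c1 + u*c2) z) \<le> (1-u) * (- ln (gx b1 c1 z)) + u * (- ln (gx b2 c2 z))"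
proof -
  have B: "(1-u)*b1 + u*b2 > 0"
    using assms by (cases "u = 0") (auto intro: add_nonneg_pos add_pos_nonneg)
  have l: "(1-u)*ln b1 + u*ln b2 \<le> ln ((1-u)*b1 + u*b2)" by (rule lnc[OF assms])
  have e: "((1-u)*c1 + u*c2) - ((1-u)*b1 + u*b2)*z = (1-u)*(c1 - b1*z) + u*(c2 - b2*z)"
    by (simp add: algebra_simps)
  have q: "((1-u)*(c1 - b1*z) + u*(c2 - b2*z))^2 / ((1-u)*b1 + u*b2) \<le> (1-u)*((c1 - b1*z)^2/b1) + u*((c2-b2*z)^2/b2)"
    by (rule qol[OF assms])
  define C where "C = ln (sqrt (2*pi))"
  define Y1 where "Y1 = (c1 - b1*z)^2"
  define Y2 where "Y2 = (c2 - b2*z)^2"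
  define X where "X = ((1-u)*(c1 - b1*z) + u*(c2 - b2*z))^2"
  have h1: "Y1/(2*b1) = (Y1/b1)/2" "Y2/(2*b2) = (Y2/b2)/2"
    "X/(2*((1-u)*b1 + u*b2)) = (X/((1-u)*b1 + u*b2))/2" by simp_all
  have r0: "\<And>P1 P2 l1 l2::real. (1-u)*(- l1/2 + C + P1/2) + u*(- l2/2 + C + P2/2)
     = -((1-u)*l1 + u*l2)/2 + C + ((1-u)*P1+u*P2)/2"
    by (simp add: field_simps)
  note r = r0[of "ln b1" "Y1/b1" "ln b2" "Y2/b2"]
  have m: "\<And>a b c d::real. a \<le> b \<Longrightarrow> c \<le> d \<Longrightarrow> -b/2 + C + c/2 \<le> -a/2 + C + d/2" by linarith
  have "- ln ((1-u)*b1 + u*b2)/2 + C + (X/((1-u)*b1 + u*b2))/2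
     \<le> -((1-u)*ln b1 + u*ln b2)/2 + C + ((1-u)*(Y1/b1)+u*(Y2/b2))/2"
    using q unfolding Y1_def[symmetric] Y2_def[symmetric] X_def[symmetric] by (rule m[OF l])
  thus ?thesis unfolding gx_eq[OF B] gx_eq[OF assms(3)] gx_eq[OF assms(4)] e
    C_def[symmetric] Y1_def[symmetric] Y2_def[symmetric] X_def[symmetric] h1 r .
qed


definition Ay :: "nat \<Rightarrow> nat \<Rightarrow> (nat \<Rightarrow> nat \<Rightarrow> nat \<Rightarrow> real) \<Rightarrow> (nat \<Rightarrow> nat \<Rightarrow> nat \<Rightarrow> nat \<Rightarrow> real)
   \<Rightarrow> (nat \<Rightarrow> real) \<Rightarrow> (nat \<Rightarrow> nat) \<Rightarrow> nat \<Rightarrow> nat \<Rightarrow> real" where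
  "Ay p q \<rho> \<phi> x y r l = (\<Sum>s\<in>{1..p}. \<rho> s r l * x s) + \<phi> r r l l + (\<Sum>j\<in>{1..q} - {r}. \<phi> r j l (y j))"

lemma cond_y_eq: "cond_y p q L \<rho> \<phi> x y r = exp (Ay p q \<rho> \<phi> x y r (y r)) / (\<Sum>l\<in>{1..L r}. exp (Ay p q \<rho> \<phi> x y r l))"
  unfolding cond_y_def Ay_def ..

lemma Ay_lin: "Ay p q (\<lambda>s j l. (1 - u) * \<rho>1 s j l + u * \<rho>2 s j l) (\<lambda>r j a b. (1 - u) * \<phi>1 r j a b + u * \<phi>2 r j a b) x y r l
  = (1-u) * Ay p q \<rho>1 \<phi>1 x y r l + u * Ay p q \<rho>2 \<phi>2 x y r l"
proof -
  have h: "\<And>S f g. (\<Sum>i\<in>S. (1-u)*f i + u*g i) = (1-u) * (sum f S) + u * (sum g S)"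
    by (simp add: sum.distrib sum_distrib_left)
  show ?thesis unfolding Ay_def by (simp only: distrib_right mult.assoc h) (simp add: algebra_simps)
qed

lemma neg_ln_cond_y: assumes "L r \<ge> 1"
  shows "- ln (cond_y p q L \<rho> \<phi> x y r) = ln (\<Sum>l\<in>{1..L r}. exp (Ay p q \<rho> \<phi> x y r l)) - Ay p q \<rho> \<phi> x y r (y r)"
proof -
  have "(\<Sum>l\<in>{1..L r}. exp (Ay p q \<rho> \<phi> x y r l)) > 0" using assms by (intro sum_pos) auto
  thus ?thesis unfolding cond_y_eq by (simp add: ln_div)
qed

definition cx :: "nat \<Rightarrow> nat \<Rightarrow> (nat \<Rightarrow> nat \<Rightarrow> real) \<Rightarrow> (nat \<Rightarrow> real) \<Rightarrow> (nat \<Rightarrow> nat \<Rightarrow> nat \<Rightarrow> real)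
   \<Rightarrow> (nat \<Rightarrow> real) \<Rightarrow> (nat \<Rightarrow> nat) \<Rightarrow> nat \<Rightarrow> real" where
  "cx p q \<beta> \<alpha> \<rho> x y s = \<alpha> s + (\<Sum>j\<in>{1..q}. \<rho> s j (y j)) - (\<Sum>t\<in>{1..p} - {s}. \<beta> s t * x t)"

lemma cond_x_eq: "cond_x p q \<beta> \<alpha> \<rho> x y s = gx (\<beta> s s) (cx p q \<beta> \<alpha> \<rho> x y s) (x s)"
  unfolding cond_x_def gx_def cx_def ..

lemma cx_lin: "cx p q (\<lambda>s t. (1 - u) * \<beta>1 s t + u * \<beta>2 s t) (\<lambda>s. (1 - u) * \<alpha>1 s + u * \<alpha>2 s)
           (\<lambda>s j l. (1 - u) * \<rho>1 s j l + u * \<rho>2 s j l) x y s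
  = (1-u) * cx p q \<beta>1 \<alpha>1 \<rho>1 x y s + u * cx p q \<beta>2 \<alpha>2 \<rho>2 x y s"
  unfolding cx_def by (simp add: algebra_simps sum.distrib sum_distrib_left sum_subtractf)

theorem proposition1:
  fixes p q :: nat and L :: "nat \<Rightarrow> nat" and x :: "nat \<Rightarrow> real" and y :: "nat \<Rightarrow> nat"
    and \<beta>1 \<beta>2 :: "nat \<Rightarrow> nat \<Rightarrow> real" and \<alpha>1 \<alpha>2 :: "nat \<Rightarrow> real"
    and \<rho>1 \<rho>2 :: "nat \<Rightarrow> nat \<Rightarrow> nat \<Rightarrow> real" and \<phi>1 \<phi>2 :: "nat \<Rightarrow> nat \<Rightarrow> nat \<Rightarrow> nat \<Rightarrow> real"
    and u :: real
  assumes "\<forall>j\<in>{1..q}. L j \<ge> 1"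
    and "\<forall>j\<in>{1..q}. y j \<in> {1..L j}"
    and "param_region p q L \<beta>1 \<phi>1"
    and "param_region p q L \<beta>2 \<phi>2"
    and "0 \<le> u" and "u \<le> 1"
  shows "neg_log_pl p q L
           (\<lambda>s t. (1 - u) * \<beta>1 s t + u * \<beta>2 s t)
           (\<lambda>s. (1 - u) * \<alpha>1 s + u * \<alpha>2 s)
           (\<lambda>s j l. (1 - u) * \<rho>1 s j l + u * \<rho>2 s j l)
           (\<lambda>r j a b. (1 - u) * \<phi>1 r j a b + u * \<phi>2 r j a b) x y
         \<le> (1 - u) * neg_log_pl p q L \<beta>1 \<alpha>1 \<rho>1 \<phi>1 x y
           + u * neg_log_pl p q L \<beta>2 \<alpha>2 \<rho>2 \<phi>2 x y"
proof -
  let ?\<beta> = "\<lambda>s t. (1 - u) * \<beta>1 s t + u * \<beta>2 s t"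
  let ?\<alpha> = "\<lambda>s. (1 - u) * \<alpha>1 s + u * \<alpha>2 s"
  let ?\<rho> = "\<lambda>s j l. (1 - u) * \<rho>1 s j l + u * \<rho>2 s j l"
  let ?\<phi> = "\<lambda>r j a b. (1 - u) * \<phi>1 r j a b + u * \<phi>2 r j a b"
  have X: "- ln (cond_x p q ?\<beta> ?\<alpha> ?\<rho> x y s) \<le> (1-u) * (- ln (cond_x p q \<beta>1 \<alpha>1 \<rho>1 x y s))
     + u * (- ln (cond_x p q \<beta>2 \<alpha>2 \<rho>2 x y s))" if s: "s \<in> {1..p}" for s
  proof -
    have b1: "\<beta>1 s s > 0" using assms(3) s unfolding param_region_def by blast
    have b2: "\<beta>2 s s > 0" using assms(4) s unfolding param_region_def by blast
    show ?thesis unfolding cond_x_eq cx_lin using gx_conv[OF assms(5,6) b1 b2] by simp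
  qed
  have Y: "- ln (cond_y p q L ?\<rho> ?\<phi> x y r) \<le> (1-u) * (- ln (cond_y p q L \<rho>1 \<phi>1 x y r))
     + u * (- ln (cond_y p q L \<rho>2 \<phi>2 x y r))" if r: "r \<in> {1..q}" for r
  proof -
    have Lr: "L r \<ge> 1" using assms(1) r by blast
    have ne: "{1..L r} \<noteq> {}" using Lr by simp
    have "ln (\<Sum>l\<in>{1..L r}. exp ((1-u) * Ay p q \<rho>1 \<phi>1 x y r l + u * Ay p q \<rho>2 \<phi>2 x y r l))
       \<le> (1-u) * ln (\<Sum>l\<in>{1..L r}. exp (Ay p q \<rho>1 \<phi>1 x y r l)) + u * ln (\<Sum>l\<in>{1..L r}. exp (Ay p q \<rho>2 \<phi>2 x y r l))"
      by (rule lse[OF assms(5,6) finite_atLeastAtMost ne])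
    thus ?thesis unfolding neg_ln_cond_y[of L r, OF Lr] Ay_lin by (simp add: algebra_simps)
  qed
  have SX: "(\<Sum>s\<in>{1..p}. - ln (cond_x p q ?\<beta> ?\<alpha> ?\<rho> x y s)) \<le>
     (1-u) * (\<Sum>s\<in>{1..p}. - ln (cond_x p q \<beta>1 \<alpha>1 \<rho>1 x y s)) + u * (\<Sum>s\<in>{1..p}. - ln (cond_x p q \<beta>2 \<alpha>2 \<rho>2 x y s))"
    unfolding sum_distrib_left sum.distrib[symmetric] by (rule sum_mono[OF X])
  have SY: "(\<Sum>r\<in>{1..q}. - ln (cond_y p q L ?\<rho> ?\<phi> x y r)) \<le>
     (1-u) * (\<Sum>r\<in>{1..q}. - ln (cond_y p q L \<rho>1 \<phi>1 x y r)) + u * (\<Sum>r\<in>{1..q}. - ln (cond_y p q L \<rho>2 \<phi>2 x y r))"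
    unfolding sum_distrib_left sum.distrib[symmetric] by (rule sum_mono[OF Y])
  show ?thesis using SX SY unfolding neg_log_pl_def sum_negf by (simp add: algebra_simps)
qed

end
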